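(* Let $\mathfrak{g}$ be a semi-simple real Lie algebra with a faithful finite dimensional real representation $\mathfrak{g}\to\mathrm{End}(W)$, and suppose there is a symmetric bilinear $\mathfrak{g}$-equivariant map $\wedge:W\times W\to W^*$ which does not vanish identically on any $2$-dimensional linear subspace of $W$. Then $\mathfrak{g}$ does not contain any subalgebra isomorphic to $\mathfrak{sl}_2(\mathbf{R})\oplus\mathfrak{sl}_2(\mathbf{R})$.
   Context: $W^*$ is the dual representation; equivariance of $\wedge$ means $X\cdot(a\wedge b)=(X\cdot a)\wedge b+a\wedge(X\cdot b)$ for $X\in\mathfrak{g}$. *)

theory Defs
  imports "HOL-Analysis.Analysis"
begin

definition lie_algebra :: "('g::real_vector \<Rightarrow> 'g \<Rightarrow> 'g) \<Rightarrow> bool" where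
  "lie_algebra br \<longleftrightarrow> bilinear br \<and> (\<forall>x. br x x = 0) \<and>
     (\<forall>x y z. br x (br y z) + br y (br z x) + br z (br x y) = 0)"

definition lie_ideal :: "('g::real_vector \<Rightarrow> 'g \<Rightarrow> 'g) \<Rightarrow> 'g set \<Rightarrow> bool" where
  "lie_ideal br I \<longleftrightarrow> subspace I \<and> (\<forall>x y. y \<in> I \<longrightarrow> br x y \<in> I)"

fun derived_series :: "('g::real_vector \<Rightarrow> 'g \<Rightarrow> 'g) \<Rightarrow> nat \<Rightarrow> 'g set \<Rightarrow> 'g set" where
  "derived_series br 0 I = I"
| "derived_series br (Suc n) I =
     span {br x y | x y. x \<in> derived_series br n I \<and> y \<in> derived_series br n I}"

definition solvable_lie :: "('g::real_vector \<Rightarrow> 'g \<Rightarrow> 'g) \<Rightarrow> 'g set \<Rightarrow> bool" where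
  "solvable_lie br I \<longleftrightarrow> (\<exists>n. derived_series br n I = {0})"

definition semisimple_lie :: "('g::real_vector \<Rightarrow> 'g \<Rightarrow> 'g) \<Rightarrow> bool" where
  "semisimple_lie br \<longleftrightarrow> lie_algebra br \<and> (\<exists>B::'g set. finite B \<and> span B = UNIV) \<and>
     (\<forall>I. lie_ideal br I \<and> solvable_lie br I \<longrightarrow> I = {0})"

definition lie_rep :: "('g::real_vector \<Rightarrow> 'g \<Rightarrow> 'g) \<Rightarrow> ('g \<Rightarrow> 'w::real_vector \<Rightarrow> 'w) \<Rightarrow> bool" where
  "lie_rep br rho \<longleftrightarrow>
     (\<forall>x y w. rho (x + y) w = rho x w + rho y w) \<and>
     (\<forall>(c::real) x w. rho (c *\<^sub>R x) w = c *\<^sub>R rho x w) \<and>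
     (\<forall>x. linear (rho x)) \<and>
     (\<forall>x y w. rho (br x y) w = rho x (rho y w) - rho y (rho x w))"

definition sl2sl2 :: "((real^2^2) \<times> (real^2^2)) set" where
  "sl2sl2 = {(A, B). trace A = 0 \<and> trace B = 0}"

definition sl2sl2_bracket ::
  "(real^2^2) \<times> (real^2^2) \<Rightarrow> (real^2^2) \<times> (real^2^2) \<Rightarrow> (real^2^2) \<times> (real^2^2)" where
  "sl2sl2_bracket p q = (fst p ** fst q - fst q ** fst p, snd p ** snd q - snd q ** snd p)"

text \<open>g contains a Lie subalgebra S isomorphic to sl2(R)+sl2(R): a linear bijection
  phi from sl2sl2 onto S preserving brackets (S is then automatically a subspace closed
  under the bracket, but we state it explicitly).\<close>
definition has_sl2sl2_subalgebra :: "('g::real_vector \<Rightarrow> 'g \<Rightarrow> 'g) \<Rightarrow> bool" where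
  "has_sl2sl2_subalgebra br \<longleftrightarrow>
     (\<exists>S phi. subspace S \<and> (\<forall>x\<in>S. \<forall>y\<in>S. br x y \<in> S) \<and>
        (\<forall>p\<in>sl2sl2. \<forall>q\<in>sl2sl2. \<forall>c::real.
            phi (p + q) = phi p + phi q \<and> phi (c *\<^sub>R p) = c *\<^sub>R phi p) \<and>
        inj_on phi sl2sl2 \<and> phi ` sl2sl2 = S \<and>
        (\<forall>p\<in>sl2sl2. \<forall>q\<in>sl2sl2. phi (sl2sl2_bracket p q) = br (phi p) (phi q)))"

end

theory Submission imports Defs "HOL-Library.Function_Algebras" begin

instantiation "fun" :: (type, real_vector) real_vector
begin
definition scaleR_fun :: "real \<Rightarrow> ('a \<Rightarrow> 'b) \<Rightarrow> 'a \<Rightarrow> 'b" where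
  "scaleR_fun c f = (\<lambda>x. c *\<^sub>R f x)"
instance by standard (auto simp: scaleR_fun_def fun_eq_iff algebra_simps)
end

lemma scaleR_fun_apply: "(c *\<^sub>R f) x = c *\<^sub>R f x"
  by (simp add: scaleR_fun_def)

lemma sum_fun_apply: "(\<Sum>i\<in>A. f i) x = (\<Sum>i\<in>A. f i x)"
  by (induction A rule: infinite_finite_induct) auto

lemma eig_indep:
  fixes T :: "'a::real_vector \<Rightarrow> 'a" and x :: "nat \<Rightarrow> 'a" and lam :: "nat \<Rightarrow> real"
  assumes T: "linear T" and fin: "finite I" and inj: "inj_on lam I"
    and ev: "\<forall>i\<in>I. x i \<noteq> 0 \<and> T (x i) = lam i *\<^sub>R x i"
  shows "independent (x ` I) \<and> inj_on x I"
  using fin inj ev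
proof (induction I rule: finite_induct)
  case empty
  then show ?case by (simp add: real_vector.independent_empty)
next
  case (insert j I)
  then have IH: "independent (x ` I)" "inj_on x I" by auto
  have xj: "x j \<noteq> 0" "T (x j) = lam j *\<^sub>R x j" using insert.prems by auto
  have nsp: "x j \<notin> span (x ` I)"
  proof
    assume "x j \<in> span (x ` I)"
    then obtain u where u: "(\<Sum>v\<in>x ` I. u v *\<^sub>R v) = x j"
      using real_vector.span_finite[of "x ` I"] insert.hyps by auto
    define lv where "lv v = lam (inv_into I x v)" for v
    have lvv: "v \<in> x ` I \<Longrightarrow> T v = lv v *\<^sub>R v \<and> lv v \<noteq> lam j" for v
    proof -
      assume "v \<in> x ` I"
      then obtain i where i: "i \<in> I" "v = x i" by auto
      have "inv_into I x v = i" using IH(2) i by (simp add: inv_into_f_f)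
      then have "lv v = lam i" by (simp add: lv_def)
      moreover have "i \<noteq> j" using insert.hyps(2) i(1) by blast
      then have "lam i \<noteq> lam j" using insert.prems(1) i(1)
        by (intro inj_on_contraD[of lam "insert j I"]) auto
      ultimately show ?thesis using insert.prems(2) i by auto
    qed
    have "T (x j) = T (\<Sum>v\<in>x ` I. u v *\<^sub>R v)" using u by simp
    also have "\<dots> = (\<Sum>v\<in>x ` I. T (u v *\<^sub>R v))" by (rule linear_sum[OF T])
    also have "\<dots> = (\<Sum>v\<in>x ` I. (u v * lv v) *\<^sub>R v)"
      by (rule sum.cong) (auto simp: lvv linear_scale[OF T])
    finally have A: "(\<Sum>v\<in>x ` I. (u v * lv v) *\<^sub>R v) = lam j *\<^sub>R x j"
      using xj(2) by simp
    have "(\<Sum>v\<in>x ` I. (u v * (lv v - lam j)) *\<^sub>R v)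
        = (\<Sum>v\<in>x ` I. (u v * lv v) *\<^sub>R v - lam j *\<^sub>R (u v *\<^sub>R v))"
      by (rule sum.cong) (simp_all add: right_diff_distrib scaleR_diff_left)
    also have "\<dots> = (\<Sum>v\<in>x ` I. (u v * lv v) *\<^sub>R v) - lam j *\<^sub>R (\<Sum>v\<in>x ` I. u v *\<^sub>R v)"
      by (simp add: sum_subtractf scaleR_sum_right)
    also have "\<dots> = 0" using A u by simp
    finally have S0: "(\<Sum>v\<in>x ` I. (u v * (lv v - lam j)) *\<^sub>R v) = 0" .
     have ND: "\<not> (\<exists>w. (\<exists>v\<in>x ` I. w v \<noteq> 0) \<and> (\<Sum>v\<in>x ` I. w v *\<^sub>R v) = 0)"
      using IH(1) real_vector.dependent_finite[of "x ` I"] insert.hyps(1) by auto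
    then have "\<forall>v\<in>x ` I. u v * (lv v - lam j) = 0"
      using spec[OF ND[unfolded not_ex], of "\<lambda>v. u v * (lv v - lam j)"] S0 by simp
    then have "\<forall>v\<in>x ` I. u v = 0" using lvv by auto
    then have "(\<Sum>v\<in>x ` I. u v *\<^sub>R v) = 0"
      using sum.neutral[of "x ` I" "\<lambda>v. u v *\<^sub>R v"] by simp
    then have "x j = 0" using u by (simp only:)
    then show False using xj(1) by blast
  qed
  have "independent (x ` insert j I)"
    using real_vector.independent_insertI[OF nsp IH(1)] by simp
  moreover have "inj_on x (insert j I)"
  proof -
    have "x j \<notin> x ` I"
    proof
      assume "x j \<in> x ` I"
      then have "x j \<in> span (x ` I)" by (rule real_vector.span_base)
      with nsp show False by simp
    qed
    then show ?thesis using IH(2) insert.hyps(2) by simp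
  qed
  ultimately show ?case by simp
qed

lemma linear_funpow:
  fixes X :: "'a::real_vector \<Rightarrow> 'a" assumes X: "linear X" shows "linear (X ^^ k)"
proof (induction k)
  case 0 show ?case unfolding funpow.simps(1) by (rule linear_id)
next
  case (Suc k)
  show ?case unfolding funpow.simps(2) by (rule linear_compose[OF Suc.IH X])
qed

lemma linear_maps_span:
  fixes f :: "'a::euclidean_space \<Rightarrow> 'b::euclidean_space"
  assumes "linear f"
  shows "f \<in> span ((\<lambda>(b,c). (\<lambda>x. (x \<bullet> b) *\<^sub>R c)) ` (Basis \<times> Basis))"
proof -
  let ?T = "(\<lambda>(b,c). (\<lambda>x. (x \<bullet> b) *\<^sub>R c)) ` (Basis \<times> (Basis::'b set))"
  have "f = (\<Sum>p\<in>Basis \<times> Basis. (f (fst p) \<bullet> snd p) *\<^sub>R (\<lambda>x. (x \<bullet> fst p) *\<^sub>R snd p))"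
  proof
    fix x
    have "(\<Sum>p\<in>Basis \<times> Basis. (f (fst p) \<bullet> snd p) *\<^sub>R (\<lambda>x. (x \<bullet> fst p) *\<^sub>R snd p)) x
        = (\<Sum>p\<in>(Basis::'a set) \<times> (Basis::'b set). ((f (fst p) \<bullet> snd p) * (x \<bullet> fst p)) *\<^sub>R snd p)"
      by (simp add: sum_fun_apply scaleR_fun_apply)
    also have "\<dots> = (\<Sum>b\<in>Basis. \<Sum>c\<in>Basis. ((f b \<bullet> c) * (x \<bullet> b)) *\<^sub>R c)"
      by (simp add: sum.cartesian_product split_def)
    also have "\<dots> = (\<Sum>b\<in>Basis. (x \<bullet> b) *\<^sub>R (\<Sum>c\<in>Basis. (f b \<bullet> c) *\<^sub>R c))"
      by (simp add: scaleR_sum_right mult.commute)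
    also have "\<dots> = (\<Sum>b\<in>Basis. (x \<bullet> b) *\<^sub>R f b)"
      by (simp add: euclidean_representation)
    also have "\<dots> = f (\<Sum>b\<in>Basis. (x \<bullet> b) *\<^sub>R b)"
      using assms by (simp add: linear_sum linear_scale)
    also have "\<dots> = f x" by (simp add: euclidean_representation)
    finally show "f x = (\<Sum>p\<in>Basis \<times> Basis. (f (fst p) \<bullet> snd p) *\<^sub>R (\<lambda>x. (x \<bullet> fst p) *\<^sub>R snd p)) x" by simp
  qed
  also have "\<dots> \<in> span ?T"
    by (intro real_vector.span_sum real_vector.span_scale real_vector.span_base) auto
  finally show ?thesis .
qed

lemma ad_pow:
  fixes H X :: "'a::real_vector \<Rightarrow> 'a"
  assumes X: "linear X" and c: "\<forall>v. H (X v) - X (H v) = c *\<^sub>R X v"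
  shows "H ((X ^^ k) v) - (X ^^ k) (H v) = (c * real k) *\<^sub>R (X ^^ k) v"
proof (induction k arbitrary: v)
  case 0 then show ?case by simp
next
  case (Suc k)
  have "H ((X ^^ Suc k) v) - (X ^^ Suc k) (H v) = H (X ((X ^^ k) v)) - X ((X ^^ k) (H v))" by simp
  also have "\<dots> = (X (H ((X ^^ k) v)) + c *\<^sub>R X ((X ^^ k) v)) - X ((X ^^ k) (H v))"
    using c by (metis add_diff_cancel_left' diff_add_cancel)
  also have "\<dots> = X (H ((X ^^ k) v) - (X ^^ k) (H v)) + c *\<^sub>R X ((X ^^ k) v)"
    using linear_diff[OF X] by (simp add: algebra_simps)
  also have "\<dots> = X ((c * real k) *\<^sub>R (X ^^ k) v) + c *\<^sub>R X ((X ^^ k) v)"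
    using Suc.IH by simp
  also have "\<dots> = (c * real (Suc k)) *\<^sub>R (X ^^ Suc k) v"
    using linear_scale[OF X] by (simp add: algebra_simps)
  finally show ?case .
qed

lemma ad_nilpotent:
  fixes H X :: "'a::euclidean_space \<Rightarrow> 'a"
  assumes H: "linear H" and X: "linear X" and c0: "c \<noteq> 0"
    and c: "\<forall>v. H (X v) - X (H v) = c *\<^sub>R X v"
  shows "\<exists>N. \<forall>v. (X ^^ N) v = 0"
proof (rule ccontr)
  assume "\<not> ?thesis"
  then have nz: "\<forall>k. X ^^ k \<noteq> 0" by (auto simp: fun_eq_iff)
  define T where "T = (\<lambda>(b,c). (\<lambda>x. (x \<bullet> b) *\<^sub>R c)) ` ((Basis::'a set) \<times> (Basis::'a set))"
  have finT: "finite T" unfolding T_def by simp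
  define n where "n = card T"
  define L where "L Y = (\<lambda>v. H (Y v) - Y (H v))" for Y :: "'a \<Rightarrow> 'a"
  have L: "linear L"
  proof (rule linearI)
    fix Y Z :: "'a \<Rightarrow> 'a" and r :: real
    show "L (Y + Z) = L Y + L Z"
      by (simp add: L_def fun_eq_iff linear_add[OF H] algebra_simps)
    show "L (r *\<^sub>R Y) = r *\<^sub>R L Y"
      by (simp add: L_def fun_eq_iff linear_scale[OF H] scaleR_fun_apply algebra_simps)
  qed
  have ev: "\<forall>k\<in>{0..n}. X ^^ k \<noteq> 0 \<and> L (X ^^ k) = (c * real k) *\<^sub>R (X ^^ k)"
    using nz ad_pow[OF X c] by (auto simp: L_def fun_eq_iff scaleR_fun_apply)
  have inj: "inj_on (\<lambda>k. c * real k) {0..n}"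
    using c0 by (auto simp: inj_on_def)
  from eig_indep[OF L _ inj ev]
  have ind: "independent ((\<lambda>k. X ^^ k) ` {0..n})" and injx: "inj_on (\<lambda>k. X ^^ k) {0..n}"
    by auto
  have "(\<lambda>k. X ^^ k) ` {0..n} \<subseteq> span T"
    unfolding T_def using linear_maps_span[OF linear_funpow[OF X]] by auto
  from real_vector.independent_span_bound[OF finT ind this]
  have "card ((\<lambda>k. X ^^ k) ` {0..n}) \<le> n" unfolding n_def by simp
  moreover have "card ((\<lambda>k. X ^^ k) ` {0..n}) = n + 1"
    using card_image[OF injx] by simp
  ultimately show False by simp
qed

lemma chain_top:
  assumes "(X ^^ N) x = 0" "x \<noteq> 0"
  shows "\<exists>k. (X ^^ k) x \<noteq> 0 \<and> X ((X ^^ k) x) = 0"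
  using assms
proof (induction N arbitrary: x)
  case 0 then show ?case by simp
next
  case (Suc N)
  show ?case
  proof (cases "X x = 0")
    case True
    then show ?thesis using Suc.prems by (intro exI[of _ 0]) simp
  next
    case False
    have "(X ^^ N) (X x) = 0" using Suc.prems(1) by (simp add: funpow_Suc_right del: funpow.simps)
    from Suc.IH[OF this False] obtain k where k: "(X ^^ k) (X x) \<noteq> 0" "X ((X ^^ k) (X x)) = 0" by blast
    have "(X ^^ Suc k) x = (X ^^ k) (X x)" by (simp add: funpow_Suc_right del: funpow.simps)
    then show ?thesis using k by (intro exI[of _ "Suc k"]) simp
  qed
qed

lemma arith_aux:
  fixes a h w :: "'a::real_vector"
  shows "a + real (Suc j) *\<^sub>R (h - real j *\<^sub>R w) + (h - (2 * real (Suc j)) *\<^sub>R w)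
    = a + real (Suc (Suc j)) *\<^sub>R (h - real (Suc j) *\<^sub>R w)"
  by (simp add: algebra_simps scaleR_2)

locale sl2trip =
  fixes E F H :: "'a::euclidean_space \<Rightarrow> 'a"
  assumes linE: "linear E" and linF: "linear F" and linH: "linear H"
    and HE: "\<forall>v. H (E v) - E (H v) = 2 *\<^sub>R E v"
    and HF: "\<forall>v. H (F v) - F (H v) = (-2) *\<^sub>R F v"
    and EF: "\<forall>v. E (F v) - F (E v) = H v"
begin

lemma swap: "sl2trip F E (\<lambda>v. - H v)"
  unfolding sl2trip_def
proof (intro conjI)
  show "linear F" by (rule linF)
  show "linear E" by (rule linE)
  show "linear (\<lambda>v. - H v)"
    by (rule linearI) (simp_all add: linear_add[OF linH] linear_scale[OF linH])
  show "\<forall>v. - H (F v) - F (- H v) = 2 *\<^sub>R F v"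
    using HF by (simp add: linear_neg[OF linF] algebra_simps)
  show "\<forall>v. - H (E v) - E (- H v) = (-2) *\<^sub>R E v"
    using HE by (simp add: linear_neg[OF linE] algebra_simps)
  show "\<forall>v. F (E v) - E (F v) = - H v"
    using EF by (metis minus_diff_eq)
qed

lemma EF': "E (F y) = F (E y) + H y"
  using EF[rule_format, of y] by (simp add: diff_eq_eq)

lemma E_nil: "\<exists>N. \<forall>v. (E ^^ N) v = 0"
  using ad_nilpotent[OF linH linE _ HE] by simp

lemma F_nil: "\<exists>N. \<forall>v. (F ^^ N) v = 0"
  using ad_nilpotent[OF linH linF _ HF] by simp

lemma eig_Epow: "H v = \<mu> *\<^sub>R v \<Longrightarrow> H ((E ^^ k) v) = (\<mu> + 2 * real k) *\<^sub>R (E ^^ k) v"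
  using ad_pow[OF linE HE, of k v] linear_scale[OF linear_funpow[OF linE]]
  by (simp add: algebra_simps eq_diff_eq)

lemma eig_Fpow: "H v = \<mu> *\<^sub>R v \<Longrightarrow> H ((F ^^ k) v) = (\<mu> - 2 * real k) *\<^sub>R (F ^^ k) v"
  using ad_pow[OF linF HF, of k v] linear_scale[OF linear_funpow[OF linF]]
  by (simp add: algebra_simps eq_diff_eq)

lemma EFpow: "E ((F ^^ Suc j) v) = (F ^^ Suc j) (E v) + real (Suc j) *\<^sub>R (F ^^ j) (H v - real j *\<^sub>R v)"
proof (induction j arbitrary: v)
  case 0
  then show ?case using EF by (simp add: algebra_simps eq_diff_eq)
next
  case (Suc j)
  have lFj: "linear (F ^^ j)" by (rule linear_funpow[OF linF])
  have lFSj: "linear (F ^^ Suc j)" by (rule linear_funpow[OF linF])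
  have "E ((F ^^ Suc (Suc j)) v) = E (F ((F ^^ Suc j) v))" by simp
  also have "\<dots> = F (E ((F ^^ Suc j) v)) + H ((F ^^ Suc j) v)"
    by (rule EF')
  also have "\<dots> = F ((F ^^ Suc j) (E v) + real (Suc j) *\<^sub>R (F ^^ j) (H v - real j *\<^sub>R v))
      + H ((F ^^ Suc j) v)" using Suc.IH by simp
  also have "H ((F ^^ Suc j) v) = (F ^^ Suc j) (H v) - (2 * real (Suc j)) *\<^sub>R (F ^^ Suc j) v"
    using ad_pow[OF linF HF, of "Suc j" v] by (simp add: algebra_simps eq_diff_eq)
  finally have "E ((F ^^ Suc (Suc j)) v) = (F ^^ Suc (Suc j)) (E v)
     + real (Suc j) *\<^sub>R (F ^^ Suc j) (H v - real j *\<^sub>R v)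
     + ((F ^^ Suc j) (H v) - (2 * real (Suc j)) *\<^sub>R (F ^^ Suc j) v)"
    using linear_add[OF linF] linear_scale[OF linF] by simp
  also have "\<dots> = (F ^^ Suc (Suc j)) (E v) + real (Suc (Suc j)) *\<^sub>R (F ^^ Suc j) (H v - real (Suc j) *\<^sub>R v)"
    unfolding linear_diff[OF lFSj] linear_scale[OF lFSj] by (rule arith_aux)
  finally show ?case .
qed

end

context sl2trip begin

lemma Fpow_lin: "linear (F ^^ k)" by (rule linear_funpow[OF linF])
lemma Epow_lin: "linear (E ^^ k)" by (rule linear_funpow[OF linE])

lemma highest:
  assumes p: "p \<noteq> 0" "E p = 0" "H p = \<mu> *\<^sub>R p"
  shows "\<exists>n. \<mu> = real n \<and> (F ^^ n) p \<noteq> 0 \<and> H ((F ^^ n) p) = (-\<mu>) *\<^sub>R (F ^^ n) p"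
proof -
  obtain N where N: "\<forall>v. (F ^^ N) v = 0" using F_nil by blast
  obtain k where k: "(F ^^ k) p \<noteq> 0" "F ((F ^^ k) p) = 0"
    using chain_top[where X=F and N=N and x=p] N p(1) by blast
  have e1: "E ((F ^^ Suc k) p) = (F ^^ Suc k) (E p) + real (Suc k) *\<^sub>R (F ^^ k) (H p - real k *\<^sub>R p)"
    by (rule EFpow)
  have e2: "(F ^^ Suc k) (E p) = 0" using p(2) linear_0[OF Fpow_lin] linear_0[OF linF] by simp
  have e3: "H p - real k *\<^sub>R p = (\<mu> - real k) *\<^sub>R p" using p(3) by (simp add: algebra_simps)
  have e4: "(F ^^ k) ((\<mu> - real k) *\<^sub>R p) = (\<mu> - real k) *\<^sub>R (F ^^ k) p"
    by (rule linear_scale[OF Fpow_lin])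
  have "E ((F ^^ Suc k) p) = (real (Suc k) * (\<mu> - real k)) *\<^sub>R (F ^^ k) p"
    using e1 e2 e3 e4 by simp
  moreover have "(F ^^ Suc k) p = 0" using k(2) by simp
  ultimately have "(real (Suc k) * (\<mu> - real k)) *\<^sub>R (F ^^ k) p = 0" using linear_0[OF linE] by simp
  then have "\<mu> = real k" using k(1) by simp
  then show ?thesis using k(1) eig_Fpow[OF p(3), of k] by (intro exI[of _ k]) simp
qed

lemma lowest:
  assumes p: "p \<noteq> 0" "F p = 0" "H p = \<mu> *\<^sub>R p"
  shows "\<exists>n. \<mu> = - real n \<and> (E ^^ n) p \<noteq> 0 \<and> H ((E ^^ n) p) = (-\<mu>) *\<^sub>R (E ^^ n) p"
proof -
  have "(\<lambda>v. - H v) p = (-\<mu>) *\<^sub>R p" using p(3) by simp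
  from sl2trip.highest[OF swap p(1,2) this] obtain n where
    n: "- \<mu> = real n" "(E ^^ n) p \<noteq> 0" "- H ((E ^^ n) p) = (- (- \<mu>)) *\<^sub>R (E ^^ n) p" by blast
  then show ?thesis by (intro exI[of _ n]) (auto simp: algebra_simps)
qed

lemma up:
  assumes v: "v \<noteq> 0" "H v = \<gamma> *\<^sub>R v"
  shows "\<exists>k n u. u \<noteq> 0 \<and> E u = 0 \<and> H u = real n *\<^sub>R u \<and> \<gamma> + 2 * real k = real n \<and> (F ^^ n) u \<noteq> 0"
proof -
  obtain N where N: "\<forall>v. (E ^^ N) v = 0" using E_nil by blast
  obtain k where k: "(E ^^ k) v \<noteq> 0" "E ((E ^^ k) v) = 0"
    using chain_top[where X=E and N=N and x=v] N v(1) by blast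
  have Hk: "H ((E ^^ k) v) = (\<gamma> + 2 * real k) *\<^sub>R (E ^^ k) v" by (rule eig_Epow[OF v(2)])
  from highest[OF k(1,2) Hk] obtain n where n: "\<gamma> + 2 * real k = real n" "(F ^^ n) ((E ^^ k) v) \<noteq> 0"
    by blast
  show ?thesis using k Hk n by (intro exI[of _ k] exI[of _ n] exI[of _ "(E ^^ k) v"]) simp
qed

lemma down:
  assumes v: "v \<noteq> 0" "H v = \<gamma> *\<^sub>R v"
  shows "\<exists>k n u. u \<noteq> 0 \<and> \<gamma> - 2 * real k = - real n \<and> (E ^^ n) u \<noteq> 0
     \<and> H ((E ^^ n) u) = real n *\<^sub>R (E ^^ n) u"
proof -
  have v': "(\<lambda>v. - H v) v = (-\<gamma>) *\<^sub>R v" using v(2) by simp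
  from sl2trip.up[OF swap v(1) v'] obtain k n u where
    u: "u \<noteq> 0" "F u = 0" "- H u = real n *\<^sub>R u" "- \<gamma> + 2 * real k = real n"
    by auto
  have Hu: "H u = (- real n) *\<^sub>R u" using u(3) by (metis minus_minus scaleR_minus_left)
  from lowest[OF u(1,2) Hu] obtain m where m: "- real n = - real m" "(E ^^ m) u \<noteq> 0"
    "H ((E ^^ m) u) = (- (- real n)) *\<^sub>R (E ^^ m) u" by blast
  have "m = n" using m(1) by simp
  then have "u \<noteq> 0 \<and> \<gamma> - 2 * real k = - real n \<and> (E ^^ n) u \<noteq> 0
     \<and> H ((E ^^ n) u) = real n *\<^sub>R (E ^^ n) u" using m u by auto
  then show ?thesis by blast
qed

lemma spec_lower:
  assumes "v \<noteq> 0" "H v = \<gamma> *\<^sub>R v"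
  shows "\<exists>n u. u \<noteq> 0 \<and> H u = real n *\<^sub>R u \<and> - real n \<le> \<gamma>"
proof -
  from down[OF assms] obtain k n u where u: "\<gamma> - 2 * real k = - real n" "(E ^^ n) u \<noteq> 0"
     "H ((E ^^ n) u) = real n *\<^sub>R (E ^^ n) u" by blast
  have "- real n \<le> \<gamma>" using u(1) by simp
  then show ?thesis using u(2,3) by blast
qed

lemma pow_zero_ge:
  fixes X :: "'a \<Rightarrow> 'a"
  assumes "\<forall>v. (X ^^ N) v = (0::'a)" "(X ^^ n) u \<noteq> 0" "linear X"
  shows "n < N"
proof (rule ccontr)
  assume "\<not> n < N"
  then obtain d where "n = d + N" by (metis add.commute le_add_diff_inverse not_less)
  then have "(X ^^ n) u = (X ^^ d) ((X ^^ N) u)" by (simp add: funpow_add)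
  also have "\<dots> = 0" using assms(1) linear_0[OF linear_funpow[OF assms(3)]] by simp
  finally show False using assms(2) by simp
qed

lemma spec_finite: "finite {\<gamma>. \<exists>v. v \<noteq> 0 \<and> H v = \<gamma> *\<^sub>R v}"
proof -
  obtain NE where NE: "\<forall>v. (E ^^ NE) v = 0" using E_nil by blast
  obtain NF where NF: "\<forall>v. (F ^^ NF) v = 0" using F_nil by blast
  have "{\<gamma>. \<exists>v. v \<noteq> 0 \<and> H v = \<gamma> *\<^sub>R v} \<subseteq> real_of_int ` {- int NE .. int NF}"
  proof
    fix \<gamma> assume "\<gamma> \<in> {\<gamma>. \<exists>v. v \<noteq> 0 \<and> H v = \<gamma> *\<^sub>R v}"
    then obtain v where v: "v \<noteq> 0" "H v = \<gamma> *\<^sub>R v" by blast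
    from up[OF v] obtain k n u where u: "\<gamma> + 2 * real k = real n" "(F ^^ n) u \<noteq> 0" by blast
    have "n < NF" using pow_zero_ge[OF NF u(2) linF] .
    from down[OF v] obtain k' n' u' where u': "\<gamma> - 2 * real k' = - real n'" "(E ^^ n') u' \<noteq> 0" by blast
    have "n' < NE" using pow_zero_ge[OF NE u'(2) linE] .
    have g: "\<gamma> = real_of_int (int n - 2 * int k)" using u(1) by simp
    have "int n - 2 * int k \<in> {- int NE .. int NF}"
      using \<open>n < NF\<close> \<open>n' < NE\<close> u(1) u'(1) g by auto
    then show "\<gamma> \<in> real_of_int ` {- int NE .. int NF}" using g by blast
  qed
  then show ?thesis by (rule finite_subset) simp
qed

lemma step3:
  assumes Z: "\<forall>v c. c \<noteq> 0 \<longrightarrow> H v = c *\<^sub>R v \<longrightarrow> v = 0" and Ev: "E v = 0"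
  shows "F v = 0 \<and> H v = 0"
proof -
  have st: "(F ^^ j) (H v) = real j *\<^sub>R (F ^^ j) v" if "(F ^^ Suc j) v = 0" for j
  proof -
    have "E ((F ^^ Suc j) v) = (F ^^ Suc j) (E v) + real (Suc j) *\<^sub>R (F ^^ j) (H v - real j *\<^sub>R v)"
      by (rule EFpow)
    then have "real (Suc j) *\<^sub>R (F ^^ j) (H v - real j *\<^sub>R v) = 0"
      using that Ev linear_0[OF linE] linear_0[OF Fpow_lin[of "Suc j"]] by simp
    then have "(F ^^ j) (H v - real j *\<^sub>R v) = 0" by simp
    then show ?thesis using linear_diff[OF Fpow_lin] linear_scale[OF Fpow_lin] by simp
  qed
  have st2: "H ((F ^^ j) v) = (- real j) *\<^sub>R (F ^^ j) v" if "(F ^^ Suc j) v = 0" for j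
  proof -
    have "H ((F ^^ j) v) = (-2 * real j) *\<^sub>R (F ^^ j) v + (F ^^ j) (H v)"
      using ad_pow[OF linF HF, of j v] by (simp add: diff_eq_eq)
    also have "\<dots> = (-2 * real j) *\<^sub>R (F ^^ j) v + real j *\<^sub>R (F ^^ j) v" using st[OF that] by simp
    also have "\<dots> = ((-2 * real j) + real j) *\<^sub>R (F ^^ j) v" by (simp only: scaleR_add_left)
    also have "\<dots> = (- real j) *\<^sub>R (F ^^ j) v" by simp
    finally show ?thesis .
  qed
  have st3: "(F ^^ Suc j) v = 0" if "(F ^^ Suc (Suc j)) v = 0" for j
  proof -
    have "- real (Suc j) \<noteq> 0" by simp
    then show ?thesis using Z st2[OF that] by blast
  qed
  have dn: "F v = 0" if "(F ^^ Suc m) v = 0" for m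
    using that
  proof (induction m)
    case 0 then show ?case by simp
  next
    case (Suc m) then show ?case using st3 by blast
  qed
  obtain N where N: "\<forall>v. (F ^^ N) v = 0" using F_nil by blast
  have Fv: "F v = 0"
  proof (cases N)
    case 0 then have "v = 0" using N by simp
    then show ?thesis using linear_0[OF linF] by simp
  next
    case (Suc m) then show ?thesis using N dn by blast
  qed
  have "H v = 0" using st[of 0] Fv by simp
  then show ?thesis using Fv by simp
qed

lemma spec_pos:
  assumes Hn: "\<exists>v. H v \<noteq> 0"
  shows "\<exists>v \<gamma>. v \<noteq> 0 \<and> \<gamma> > 0 \<and> H v = \<gamma> *\<^sub>R v"
proof (rule ccontr)
  assume neg: "\<not> ?thesis"
  have Z: "\<forall>v c. c \<noteq> 0 \<longrightarrow> H v = c *\<^sub>R v \<longrightarrow> v = 0"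
  proof (intro allI impI, rule ccontr)
    fix v c assume c: "c \<noteq> 0" "H v = c *\<^sub>R v" "v \<noteq> 0"
    from spec_lower[OF c(3) c(2)] obtain n u where u: "u \<noteq> 0" "H u = real n *\<^sub>R u" "- real n \<le> c"
      by blast
    show False
    proof (cases "c > 0")
      case True then show False using neg c by blast
    next
      case False
      then have "real n > 0" using c(1) u(3) by simp
      then show False using neg u by blast
    qed
  qed
  have K: "F v = 0 \<and> H v = 0" if "E v = 0" for v using step3[OF Z that] .
  have E0: "\<forall>x. E x = 0"
  proof (rule ccontr)
    assume "\<not> ?thesis" then obtain x where x: "E x \<noteq> 0" by blast
    obtain N where N: "\<forall>v. (E ^^ N) v = 0" using E_nil by blast
    obtain k where k: "(E ^^ k) (E x) \<noteq> 0" "E ((E ^^ k) (E x)) = 0"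
      using chain_top[where X=E and N=N and x="E x"] N x by blast
    define w where "w = (E ^^ k) x"
    have Ew: "E w = (E ^^ k) (E x)" unfolding w_def by (simp add: funpow_swap1)
    define u where "u = E w"
    have u: "u \<noteq> 0" "E u = 0" using k Ew u_def by auto
    have Fu: "F u = 0" and Hu: "H u = 0" using K[OF u(2)] by auto
    have "H (E w) - E (H w) = 2 *\<^sub>R E w" using HE by blast
    then have "- E (H w) = 2 *\<^sub>R u" using Hu u_def by simp
    then have EHw: "E (H w) = (-2) *\<^sub>R u" by (metis minus_minus scaleR_minus_left)
    have Hw: "H w = E (F w)"
      using EF'[of w] Fu u_def by simp
    have "E (H w + 2 *\<^sub>R w) = 0"
      using EHw linear_add[OF linE] linear_scale[OF linE] u_def by simp
    then have "F (H w + 2 *\<^sub>R w) = 0" using K by blast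
    then have FHw: "F (H w) = (-2) *\<^sub>R F w"
      using linear_add[OF linF] linear_scale[OF linF] by (simp add: eq_neg_iff_add_eq_0)
    have "H (F w) = (-2) *\<^sub>R F w + F (H w)" using HF[rule_format, of w] by (simp add: diff_eq_eq)
    also have "\<dots> = (-2) *\<^sub>R F w + (-2) *\<^sub>R F w" using FHw by simp
    also have "\<dots> = ((-2) + (-2)) *\<^sub>R F w" by (simp only: scaleR_add_left)
    also have "\<dots> = (-4) *\<^sub>R F w" by simp
    finally have "H (F w) = (-4) *\<^sub>R F w" .
    then have "F w = 0" using Z by (metis zero_neq_numeral neg_equal_0_iff_equal)
    then have "H w = 0" using Hw linear_0[OF linE] by simp
    then have "(-2) *\<^sub>R u = 0" using EHw linear_0[OF linE] by simp
    then show False using u(1) by simp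
  qed
  have "H v = 0" for v using EF[rule_format, of v] E0 linear_0[OF linF] by simp
  then show False using Hn by blast
qed

end

definition me :: "real^2^2" where "me = (\<chi> i j. if i = 1 \<and> j = 2 then 1 else 0)"
definition mf :: "real^2^2" where "mf = (\<chi> i j. if i = 2 \<and> j = 1 then 1 else 0)"
definition mh :: "real^2^2" where "mh = (\<chi> i j. if i = j then (if i = 1 then 1 else -1) else 0)"

lemma UNIV2: "(UNIV :: 2 set) = {1, 2}" by (rule UNIV_2)

lemma mat_br1: "mh ** me - me ** mh = 2 *\<^sub>R me"
  by (simp add: vec_eq_iff forall_2 matrix_matrix_mult_def me_def mh_def UNIV2)
lemma mat_br2: "mh ** mf - mf ** mh = (-2) *\<^sub>R mf"
  by (simp add: vec_eq_iff forall_2 matrix_matrix_mult_def mf_def mh_def UNIV2)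
lemma mat_br3: "me ** mf - mf ** me = mh"
  by (simp add: vec_eq_iff forall_2 matrix_matrix_mult_def me_def mf_def mh_def UNIV2)
lemma mat_tr: "trace me = 0" "trace mf = 0" "trace mh = 0" "trace (0::real^2^2) = 0"
  by (simp_all add: trace_def me_def mf_def mh_def UNIV2)
lemma mh_nz: "mh \<noteq> 0"
  by (simp add: vec_eq_iff forall_2 mh_def)
lemma mat_zero: "(0::real^2^2) ** A = 0" "A ** (0::real^2^2) = 0"
  by (simp_all add: vec_eq_iff matrix_matrix_mult_def)

lemma inner_ext:
  fixes a b :: "'a::real_inner"
  assumes "\<forall>x. x \<bullet> a = x \<bullet> b" shows "a = b"
proof -
  have "(a - b) \<bullet> (a - b) = 0" using assms by (simp add: inner_diff_right)
  then show ?thesis by simp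
qed

lemma dual_comm:
  fixes A B D :: "'a::euclidean_space \<Rightarrow> 'a"
  assumes A: "linear A" and B: "linear B" and D: "linear D"
    and AB: "\<forall>v. A (B v) - B (A v) = c *\<^sub>R D v"
  shows "\<forall>v. adjoint A (adjoint B v) - adjoint B (adjoint A v) = (-c) *\<^sub>R adjoint D v"
proof
  fix v
  show "adjoint A (adjoint B v) - adjoint B (adjoint A v) = (-c) *\<^sub>R adjoint D v"
  proof (rule inner_ext, rule allI)
    fix x
    have "x \<bullet> adjoint A (adjoint B v) = B (A x) \<bullet> v"
      by (simp add: adjoint_works[OF A] adjoint_works[OF B])
    moreover have "x \<bullet> adjoint B (adjoint A v) = A (B x) \<bullet> v"
      by (simp add: adjoint_works[OF A] adjoint_works[OF B])
    moreover have "A (B x) = B (A x) + c *\<^sub>R D x" using AB by (metis diff_add_cancel add.commute)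
    ultimately show "x \<bullet> (adjoint A (adjoint B v) - adjoint B (adjoint A v)) = x \<bullet> ((-c) *\<^sub>R adjoint D v)"
      by (simp add: inner_diff_right adjoint_works[OF D] inner_add_left)
  qed
qed

lemma dual_trip:
  assumes "sl2trip E F H"
  shows "sl2trip (\<lambda>v. - adjoint E v) (\<lambda>v. - adjoint F v) (\<lambda>v. - adjoint H v)"
proof -
  interpret sl2trip E F H by fact
  have lE: "linear (adjoint E)" and lF: "linear (adjoint F)" and lH: "linear (adjoint H)"
    using adjoint_linear linE linF linH by blast+
  have neg: "linear (\<lambda>v. - X v)" if "linear X" for X :: "'a \<Rightarrow> 'a"
    by (rule linearI) (simp_all add: linear_add[OF that] linear_scale[OF that])
  have HE2: "\<forall>v. H (E v) - E (H v) = 2 *\<^sub>R E v" by (rule HE)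
  have HF2: "\<forall>v. H (F v) - F (H v) = (-2) *\<^sub>R F v" by (rule HF)
  have EF2: "\<forall>v. E (F v) - F (E v) = 1 *\<^sub>R H v" using EF by simp
  note d1 = dual_comm[OF linH linE linE HE2]
  note d2 = dual_comm[OF linH linF linF HF2]
  note d3 = dual_comm[OF linE linF linH EF2]
  show ?thesis
    unfolding sl2trip_def
  proof (intro conjI)
    show "linear (\<lambda>v. - adjoint E v)" "linear (\<lambda>v. - adjoint F v)" "linear (\<lambda>v. - adjoint H v)"
      using neg lE lF lH by blast+
    show "\<forall>v. - adjoint H (- adjoint E v) - - adjoint E (- adjoint H v) = 2 *\<^sub>R - adjoint E v"
      using d1 by (simp add: linear_neg[OF lH] linear_neg[OF lE])
    show "\<forall>v. - adjoint H (- adjoint F v) - - adjoint F (- adjoint H v) = (-2) *\<^sub>R - adjoint F v"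
      using d2 by (simp add: linear_neg[OF lH] linear_neg[OF lF])
    show "\<forall>v. - adjoint E (- adjoint F v) - - adjoint F (- adjoint E v) = - adjoint H v"
      using d3 by (simp add: linear_neg[OF lE] linear_neg[OF lF])
  qed
qed

lemma dual_commute:
  fixes X Y :: "'a::euclidean_space \<Rightarrow> 'a"
  assumes "linear X" "linear Y" "\<forall>v. X (Y v) = Y (X v)"
  shows "\<forall>v. (- adjoint X ((- adjoint Y v))) = - adjoint Y (- adjoint X v)"
proof -
  have "\<forall>v. X (Y v) - Y (X v) = 0 *\<^sub>R X v" using assms(3) by simp
  from dual_comm[OF assms(1,2,1) this] show ?thesis
    using linear_neg[OF adjoint_linear[OF assms(1)]] linear_neg[OF adjoint_linear[OF assms(2)]]
    by simp
qed

lemma comm_pow: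
  assumes "\<forall>v. X (Y v) = Y (X v)"
  shows "X ((Y ^^ k) v) = (Y ^^ k) (X v)"
  using assms by (induction k) auto

lemma kerT:
  fixes A :: "'a::euclidean_space \<Rightarrow> 'a"
  assumes A: "linear A" and ker: "\<forall>x. A x = 0 \<longrightarrow> x \<in> span {a}"
    and q1: "q1 \<noteq> 0" and o1: "\<forall>x. q1 \<bullet> A x = 0" and o2: "\<forall>x. q2 \<bullet> A x = 0"
  shows "q2 \<in> span {q1}"
proof (rule ccontr)
  assume nq: "q2 \<notin> span {q1}"
  obtain a' :: 'a where a': "a' \<noteq> 0" "\<forall>x. A x = 0 \<longrightarrow> x \<in> span {a'}"
  proof (cases "a = 0")
    case False then show ?thesis using that ker by blast
  next
    case True
    obtain b :: 'a where b: "b \<in> Basis" using nonempty_Basis by blast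
    then have "b \<noteq> 0" by auto
    moreover have "\<forall>x. A x = 0 \<longrightarrow> x \<in> span {b}"
    proof (intro allI impI)
      fix x assume "A x = 0"
      then have "x \<in> span {0}" using ker True by simp
      then have "x = 0" by (simp add: real_vector.span_singleton)
      then show "x \<in> span {b}" by (simp add: real_vector.span_zero)
    qed
    ultimately show ?thesis using that by blast
  qed
  have indq: "independent {q2, q1}"
    using real_vector.independent_insertI[OF nq] q1
    by (simp add: real_vector.independent_insertI real_vector.independent_empty real_vector.span_empty)
  have q12: "q2 \<noteq> q1" using nq real_vector.span_base by blast
  have c2: "card {q2, q1} = 2" using q12 by simp
  have "card {q2, q1} \<le> DIM('a)"
    using eucl.independent_card_le_dim[OF subset_UNIV indq] eucl.dim_UNIV by simp
  then have D2: "DIM('a) \<ge> 2" using c2 by simp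
  define Z where "Z = {x. a' \<bullet> x = 0}"
  have subZ: "subspace Z" unfolding Z_def by (rule subspace_hyperplane)
  have dZ: "dim Z = DIM('a) - 1" unfolding Z_def by (rule dim_hyperplane[OF a'(1)])
  have injZ: "inj_on A (span Z)"
  proof (rule inj_onI)
    fix x y assume xy: "x \<in> span Z" "y \<in> span Z" "A x = A y"
    then have xZ: "x \<in> Z" "y \<in> Z" using real_vector.span_eq_iff subZ by blast+
    have "A (x - y) = 0" using xy(3) linear_diff[OF A] by simp
    then have "x - y \<in> span {a'}" using a'(2) by blast
    then obtain k where k: "x - y = k *\<^sub>R a'" by (auto simp: real_vector.span_singleton)
    have "a' \<bullet> (x - y) = 0" using xZ unfolding Z_def by (simp add: inner_diff_right)
    then have "k * (a' \<bullet> a') = 0" using k by simp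
    then have "k = 0" using a'(1) by simp
    then show "x = y" using k by simp
  qed
  have dimAZ: "dim (A ` Z) = DIM('a) - 1" using eucl.dim_image_eq[OF A injZ] dZ by simp
  define Y where "Y = {y \<in> UNIV. \<forall>x \<in> span {q2, q1}. orthogonal x y}"
  have dY: "dim Y + dim (span {q2, q1}) = dim (UNIV :: 'a set)"
    unfolding Y_def by (rule dim_subspace_orthogonal_to_vectors) (auto simp: real_vector.subspace_span)
  have "dim (span {q2, q1}) = 2"
    using real_vector.dim_span_eq_card_independent[OF indq] c2 by simp
  then have dY2: "dim Y = DIM('a) - 2" using dY eucl.dim_UNIV by simp
  have "A ` Z \<subseteq> Y"
  proof
    fix y assume "y \<in> A ` Z"
    then obtain x where y: "y = A x" by blast
    have "z \<bullet> A x = 0" if "z \<in> span {q2, q1}" for z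
    proof -
      have "subspace {z. z \<bullet> A x = 0}" by (rule subspace_hyperplane2)
      then show ?thesis using that o1 o2 real_vector.span_induct[of z "{q2,q1}" "\<lambda>z. z \<bullet> A x = 0"]
        by auto
    qed
    then show "y \<in> Y" unfolding Y_def y orthogonal_def by blast
  qed
  then have "dim (A ` Z) \<le> dim Y" by (rule eucl.dim_subset)
  then show False using dimAZ dY2 D2 by simp
qed

lemma wedge_zero_eig:
  fixes wedge :: "'a::euclidean_space \<Rightarrow> 'a \<Rightarrow> 'a \<Rightarrow> real"
  assumes wl: "\<forall>a b. linear (wedge a b)" and wb: "\<forall>c. bilinear (\<lambda>a b. wedge a b c)"
    and X: "linear X"
    and eq: "\<forall>a b c. wedge (X a) b c + wedge a (X b) c = - wedge a b (X c)"
    and a: "X a = \<alpha> *\<^sub>R a" and b: "X b = \<beta> *\<^sub>R b"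
    and inj: "\<forall>v. X v = (-(\<alpha> + \<beta>)) *\<^sub>R v \<longrightarrow> v = 0"
  shows "wedge a b c = 0"
proof -
  have lw: "linear (wedge a b)" using wl by blast
  have key: "wedge a b (X d) = (-(\<alpha> + \<beta>)) * wedge a b d" for d
  proof -
    have "wedge (X a) b d = \<alpha> * wedge a b d"
      using a bilinear_lmul[OF wb[rule_format, of d]] by simp
    moreover have "wedge a (X b) d = \<beta> * wedge a b d"
      using b bilinear_rmul[OF wb[rule_format, of d]] by simp
    ultimately show ?thesis using eq[rule_format, of a b d] by (simp add: algebra_simps)
  qed
  define G where "G v = X v + (\<alpha> + \<beta>) *\<^sub>R v" for v
  have lG: "linear G" unfolding G_def
    by (rule linearI) (simp_all add: linear_add[OF X] linear_scale[OF X] algebra_simps)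
  have "inj G"
  proof (rule linear_injective_0[OF lG, THEN iffD2], intro allI impI)
    fix v assume "G v = 0"
    then have "X v = - ((\<alpha> + \<beta>) *\<^sub>R v)" unfolding G_def by (simp add: eq_neg_iff_add_eq_0)
    then have "X v = (-(\<alpha> + \<beta>)) *\<^sub>R v" by (simp only: scaleR_minus_left)
    then show "v = 0" using inj by blast
  qed
  then have "surj G" using eucl.linear_injective_imp_surjective[OF lG] by simp
  then obtain d where d: "c = G d" by (metis surjD)
  have "wedge a b c = wedge a b (X d) + (\<alpha> + \<beta>) * wedge a b d"
    using d linear_add[OF lw] linear_scale[OF lw] unfolding G_def by simp
  also have "\<dots> = 0" by (simp only: key mult_minus_left)
  finally show ?thesis .
qed

lemma top_eig:
  assumes T: "sl2trip E F H" and Hn: "\<exists>v. H v \<noteq> 0"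
  shows "\<exists>M a. M > 0 \<and> a \<noteq> 0 \<and> H a = M *\<^sub>R a \<and> (\<forall>v. H v = M *\<^sub>R v \<longrightarrow> E v = 0)
     \<and> (\<forall>v. H v = (-(M + M)) *\<^sub>R v \<longrightarrow> v = 0)"
proof -
  interpret sl2trip E F H by fact
  define S where "S = {\<gamma>. \<exists>v. v \<noteq> 0 \<and> H v = \<gamma> *\<^sub>R v}"
  have fS: "finite S" unfolding S_def by (rule spec_finite)
  obtain v0 g0 where g0: "v0 \<noteq> 0" "g0 > 0" "H v0 = g0 *\<^sub>R v0" using spec_pos[OF Hn] by blast
  have g0S: "g0 \<in> S" unfolding S_def using g0 by blast
  define M where "M = Max S"
  have MS: "M \<in> S" unfolding M_def using fS g0S by (intro Max_in) auto
  have Mge: "\<gamma> \<le> M" if "\<gamma> \<in> S" for \<gamma> unfolding M_def using fS that by simp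
  have M0: "M > 0" using Mge[OF g0S] g0(2) by simp
  obtain a where a: "a \<noteq> 0" "H a = M *\<^sub>R a" using MS unfolding S_def by blast
  have Ekill: "E v = 0" if "H v = M *\<^sub>R v" for v
  proof (rule ccontr)
    assume "E v \<noteq> 0"
    moreover have "H (E v) = (M + 2) *\<^sub>R E v" using eig_Epow[OF that, of 1] by simp
    ultimately have "M + 2 \<in> S" unfolding S_def by blast
    then show False using Mge by fastforce
  qed
  have inj2: "v = 0" if "H v = (-(M + M)) *\<^sub>R v" for v
  proof (rule ccontr)
    assume "v \<noteq> 0"
    from spec_lower[OF this that] obtain n u where u: "u \<noteq> 0" "H u = real n *\<^sub>R u" "- real n \<le> -(M + M)"
      by blast
    have "real n \<in> S" unfolding S_def using u by blast
    then show False using Mge u(3) M0 by fastforce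
  qed
  show ?thesis using M0 a Ekill inj2 by blast
qed

lemma line_triv:
  assumes T: "sl2trip E F H" and s: "E a = s *\<^sub>R a" and t: "F a = t *\<^sub>R a"
  shows "H a = 0 \<and> E a = 0"
proof -
  interpret sl2trip E F H by fact
  have "H a = E (F a) - F (E a)" using EF by simp
  also have "\<dots> = 0" using s t linear_scale[OF linE] linear_scale[OF linF] by simp
  finally have Ha: "H a = 0" .
  have "H (E a) - E (H a) = 2 *\<^sub>R E a" using HE by blast
  then have "2 *\<^sub>R E a = 0" using Ha s linear_scale[OF linH] linear_0[OF linE] by simp
  then show ?thesis using Ha by simp
qed

lemma caseA:
  fixes wedge :: "'a::euclidean_space \<Rightarrow> 'a \<Rightarrow> 'a \<Rightarrow> real"
  assumes wl: "\<forall>a b. linear (wedge a b)" and wb: "\<forall>c. bilinear (\<lambda>a b. wedge a b c)"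
    and nd: "\<forall>U. subspace U \<and> dim U = 2 \<longrightarrow> (\<exists>a\<in>U. \<exists>b\<in>U. (\<exists>c. wedge a b c \<noteq> 0))"
    and H: "linear H"
    and eq: "\<forall>a b c. wedge (H a) b c + wedge a (H b) c = - wedge a b (H c)"
    and inj2: "\<forall>v. H v = (-(M + M)) *\<^sub>R v \<longrightarrow> v = 0"
    and a: "a \<noteq> 0" "H a = M *\<^sub>R a" and x: "H x = M *\<^sub>R x"
  shows "x \<in> span {a}"
proof (rule ccontr)
  assume nx: "x \<notin> span {a}"
  define U where "U = span {x, a}"
  have ind: "independent {x, a}"
    using real_vector.independent_insertI[OF nx] a(1)
    by (simp add: real_vector.independent_insertI real_vector.independent_empty real_vector.span_empty)
  have xa: "x \<noteq> a" using nx real_vector.span_base by blast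
  have dU: "dim U = 2" unfolding U_def
    using real_vector.dim_span_eq_card_independent[OF ind] xa by simp
  have sU: "subspace U" unfolding U_def by (rule real_vector.subspace_span)
  have subL: "subspace {y. H y = M *\<^sub>R y}"
    unfolding subspace_def by (auto simp: linear_add[OF H] linear_scale[OF H] linear_0[OF H] algebra_simps)
  have inU: "H y = M *\<^sub>R y" if "y \<in> U" for y
    using real_vector.span_induct[of y "{x, a}" "\<lambda>y. H y = M *\<^sub>R y"] that subL x a(2)
    unfolding U_def by auto
  from nd sU dU obtain a' b' c where ab: "a' \<in> U" "b' \<in> U" "wedge a' b' c \<noteq> 0" by blast
  have "wedge a' b' c = 0"
    by (rule wedge_zero_eig[OF wl wb H eq inU[OF ab(1)] inU[OF ab(2)]]) (use inj2 in blast)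
  then show False using ab(3) by simp
qed

lemma negeq:
  fixes x y :: "'a::real_vector"
  shows "- x = (-c) *\<^sub>R y \<Longrightarrow> x = c *\<^sub>R y"
  by (metis minus_minus scaleR_minus_left)

lemma core:
  fixes wedge :: "'w::euclidean_space \<Rightarrow> 'w \<Rightarrow> 'w \<Rightarrow> real"
    and E1 F1 H1 E2 F2 H2 :: "'w \<Rightarrow> 'w"
  assumes T1: "sl2trip E1 F1 H1" and T2: "sl2trip E2 F2 H2"
    and comm: "\<And>X Y v. X \<in> {E1, F1, H1} \<Longrightarrow> Y \<in> {E2, F2, H2} \<Longrightarrow> X (Y v) = Y (X v)"
    and H1n: "\<exists>v. H1 v \<noteq> 0" and H2n: "\<exists>v. H2 v \<noteq> 0"
    and wl: "\<forall>a b. linear (wedge a b)" and wb: "\<forall>c. bilinear (\<lambda>a b. wedge a b c)"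
    and ws: "\<forall>a b. wedge a b = wedge b a"
    and eqv: "\<And>X. X \<in> {E1, F1, H1, E2, F2, H2} \<Longrightarrow>
       \<forall>a b c. wedge (X a) b c + wedge a (X b) c = - wedge a b (X c)"
    and nd: "\<forall>U. subspace U \<and> dim U = 2 \<longrightarrow> (\<exists>a\<in>U. \<exists>b\<in>U. (\<exists>c. wedge a b c \<noteq> 0))"
  shows False
proof -
  interpret t1: sl2trip E1 F1 H1 by fact
  interpret t2: sl2trip E2 F2 H2 by fact
  obtain M a where Ma: "M > 0" "a \<noteq> 0" "H1 a = M *\<^sub>R a" "\<forall>v. H1 v = M *\<^sub>R v \<longrightarrow> E1 v = 0"
     "\<forall>v. H1 v = (-(M + M)) *\<^sub>R v \<longrightarrow> v = 0" using top_eig[OF T1 H1n] by blast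
  obtain N b where Nb: "N > 0" "b \<noteq> 0" "H2 b = N *\<^sub>R b" "\<forall>v. H2 v = N *\<^sub>R v \<longrightarrow> E2 v = 0"
     "\<forall>v. H2 v = (-(N + N)) *\<^sub>R v \<longrightarrow> v = 0" using top_eig[OF T2 H2n] by blast
  have eH1: "\<forall>a b c. wedge (H1 a) b c + wedge a (H1 b) c = - wedge a b (H1 c)" using eqv by blast
  have eH2: "\<forall>a b c. wedge (H2 a) b c + wedge a (H2 b) c = - wedge a b (H2 c)" using eqv by blast
  have eE1: "\<forall>a b c. wedge (E1 a) b c + wedge a (E1 b) c = - wedge a b (E1 c)" using eqv by blast
  have eE2: "\<forall>a b c. wedge (E2 a) b c + wedge a (E2 b) c = - wedge a b (E2 c)" using eqv by blast
  have B1: "x \<in> span {a}" if "H1 x = M *\<^sub>R x" for x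
    by (rule caseA[OF wl wb nd t1.linH eH1 Ma(5) Ma(2,3) that])
  have B2: "x \<in> span {b}" if "H2 x = N *\<^sub>R x" for x
    by (rule caseA[OF wl wb nd t2.linH eH2 Nb(5) Nb(2,3) that])
  have "H1 (E2 a) = M *\<^sub>R E2 a" using comm[of H1 E2 a] Ma(3) linear_scale[OF t2.linE] by simp
  then obtain s where s: "E2 a = s *\<^sub>R a" using B1 by (auto simp: real_vector.span_singleton)
  have "H1 (F2 a) = M *\<^sub>R F2 a" using comm[of H1 F2 a] Ma(3) linear_scale[OF t2.linF] by simp
  then obtain t where t: "F2 a = t *\<^sub>R a" using B1 by (auto simp: real_vector.span_singleton)
  have a2: "H2 a = 0" "E2 a = 0" using line_triv[OF T2 s t] by auto
  have "H2 (E1 b) = N *\<^sub>R E1 b" using comm[of E1 H2 b] Nb(3) linear_scale[OF t1.linE] by simp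
  then obtain s' where s': "E1 b = s' *\<^sub>R b" using B2 by (auto simp: real_vector.span_singleton)
  have "H2 (F1 b) = N *\<^sub>R F1 b" using comm[of F1 H2 b] Nb(3) linear_scale[OF t1.linF] by simp
  then obtain t' where t': "F1 b = t' *\<^sub>R b" using B2 by (auto simp: real_vector.span_singleton)
  have b1: "H1 b = 0" "E1 b = 0" using line_triv[OF T1 s' t'] by auto
  have a1: "E1 a = 0" using Ma(3,4) by blast
  have b2: "E2 b = 0" using Nb(3,4) by blast
  have nb: "b \<notin> span {a}"
  proof
    assume "b \<in> span {a}"
    then obtain k where "b = k *\<^sub>R a" by (auto simp: real_vector.span_singleton)
    then have "H2 b = 0" using a2(1) linear_scale[OF t2.linH] by simp
    then show False using Nb(1,2,3) by simp
  qed
  have waa: "wedge a a c = 0" for c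
    by (rule wedge_zero_eig[OF wl wb t1.linH eH1 Ma(3) Ma(3)]) (use Ma(5) in blast)
  have wbb: "wedge b b c = 0" for c
    by (rule wedge_zero_eig[OF wl wb t2.linH eH2 Nb(3) Nb(3)]) (use Nb(5) in blast)
  have wab: "wedge a b c = 0" for c
  proof -
    have lw: "linear (wedge a b)" using wl by blast
    have bc: "bilinear (\<lambda>x y. wedge x y d)" for d using wb by blast
    have fH1: "wedge a b (H1 d) = (-M) * wedge a b d" for d
      using eH1[rule_format, of a b d] Ma(3) b1(1) bilinear_lmul[OF bc] bilinear_rzero[OF bc] by simp
    have fH2: "wedge a b (H2 d) = (-N) * wedge a b d" for d
      using eH2[rule_format, of a b d] Nb(3) a2(1) bilinear_rmul[OF bc] bilinear_lzero[OF bc] by simp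
    have fE1: "wedge a b (E1 d) = 0" for d
      using eE1[rule_format, of a b d] a1 b1(2) bilinear_lzero[OF bc] bilinear_rzero[OF bc] by simp
    have fE2: "wedge a b (E2 d) = 0" for d
      using eE2[rule_format, of a b d] a2(2) b2 bilinear_lzero[OF bc] bilinear_rzero[OF bc] by simp
    define p where "p = (\<Sum>i\<in>Basis. wedge a b i *\<^sub>R i)"
    have rp: "wedge a b d = p \<bullet> d" for d
    proof -
      have "wedge a b d = wedge a b (\<Sum>i\<in>Basis. (d \<bullet> i) *\<^sub>R i)" by (simp add: euclidean_representation)
      also have "\<dots> = (\<Sum>i\<in>Basis. (d \<bullet> i) * wedge a b i)"
        by (simp add: linear_sum[OF lw] linear_scale[OF lw])
      also have "\<dots> = p \<bullet> d" unfolding p_def by (simp add: inner_sum_right inner_commute mult.commute)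
      finally show ?thesis .
    qed
    define E1' where "E1' v = - adjoint E1 v" for v
    define F1' where "F1' v = - adjoint F1 v" for v
    define H1' where "H1' v = - adjoint H1 v" for v
    define E2' where "E2' v = - adjoint E2 v" for v
    define F2' where "F2' v = - adjoint F2 v" for v
    define H2' where "H2' v = - adjoint H2 v" for v
    have D1: "sl2trip E1' F1' H1'" unfolding E1'_def F1'_def H1'_def using dual_trip[OF T1] by simp
    have D2: "sl2trip E2' F2' H2'" unfolding E2'_def F2'_def H2'_def using dual_trip[OF T2] by simp
    interpret d1: sl2trip E1' F1' H1' by (rule D1)
    interpret d2: sl2trip E2' F2' H2' by (rule D2)
    have lin1: "linear X" if "X \<in> {E1, F1, H1}" for X using that t1.linE t1.linF t1.linH by auto
    have lin2: "linear Y" if "Y \<in> {E2, F2, H2}" for Y using that t2.linE t2.linF t2.linH by auto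
    have dcomm: "\<forall>v. (- adjoint X ((- adjoint Y v))) = - adjoint Y (- adjoint X v)"
      if "X \<in> {E1, F1, H1}" "Y \<in> {E2, F2, H2}" for X Y
      using dual_commute[OF lin1[OF that(1)] lin2[OF that(2)]] comm[OF that] by blast
    have cF1E2: "\<forall>v. E2' (F1' v) = F1' (E2' v)"
      using dcomm[of F1 E2] unfolding E2'_def F1'_def by simp
    have cF1H2: "\<forall>v. H2' (F1' v) = F1' (H2' v)"
      using dcomm[of F1 H2] unfolding H2'_def F1'_def by simp
    have cF2H1: "\<forall>v. H1' (F2' v) = F2' (H1' v)"
      using dcomm[of H1 F2] unfolding H1'_def F2'_def by simp
    have cE2H1: "\<forall>v. H1' (E2' v) = E2' (H1' v)"
      using dcomm[of H1 E2] unfolding H1'_def E2'_def by simp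
    have cF2H1': "\<forall>v. H1' (F2' v) = F2' (H1' v)" by (rule cF2H1)
    show ?thesis
    proof (cases "p = 0")
      case True then show ?thesis using rp by simp
    next
      case False
      have ptr: "x \<bullet> (- adjoint X p) = - wedge a b (X x)" if "linear X" for X :: "'w \<Rightarrow> 'w" and x
        by (simp add: adjoint_works[OF that] rp inner_commute)
      have pH1: "H1' p = M *\<^sub>R p"
      proof (rule inner_ext, rule allI)
        fix x show "x \<bullet> H1' p = x \<bullet> (M *\<^sub>R p)"
          unfolding H1'_def ptr[OF t1.linH] fH1 by (simp add: rp inner_commute)
      qed
      have pH2: "H2' p = N *\<^sub>R p"
      proof (rule inner_ext, rule allI)
        fix x show "x \<bullet> H2' p = x \<bullet> (N *\<^sub>R p)"
          unfolding H2'_def ptr[OF t2.linH] fH2 by (simp add: rp inner_commute)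
      qed
      have pE1: "E1' p = 0"
      proof (rule inner_ext, rule allI)
        fix x show "x \<bullet> E1' p = x \<bullet> 0"
          unfolding E1'_def ptr[OF t1.linE] fE1 by simp
      qed
      have pE2: "E2' p = 0"
      proof (rule inner_ext, rule allI)
        fix x show "x \<bullet> E2' p = x \<bullet> 0"
          unfolding E2'_def ptr[OF t2.linE] fE2 by simp
      qed
      from d1.highest[OF False pE1 pH1] obtain n1 where
        n1: "M = real n1" "(F1' ^^ n1) p \<noteq> 0" "H1' ((F1' ^^ n1) p) = (-M) *\<^sub>R (F1' ^^ n1) p"
        by blast
      define q1 where "q1 = (F1' ^^ n1) p"
      have q1E2: "E2' q1 = 0"
        unfolding q1_def using comm_pow[OF cF1E2] pE2 linear_0[OF d1.Fpow_lin] by simp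
      have q1H2: "H2' q1 = N *\<^sub>R q1"
        unfolding q1_def using comm_pow[OF cF1H2] pH2 linear_scale[OF d1.Fpow_lin] by simp
      from d2.highest[OF n1(2)[folded q1_def] q1E2 q1H2] obtain n2 where
        n2: "N = real n2" "(F2' ^^ n2) q1 \<noteq> 0" "H2' ((F2' ^^ n2) q1) = (-N) *\<^sub>R (F2' ^^ n2) q1"
        by blast
      define q where "q = (F2' ^^ n2) q1"
      have q0: "q \<noteq> 0" using n2(2) q_def by simp
      have qH2: "H2' q = (-N) *\<^sub>R q" using n2(3) q_def by simp
      have "H1' q = (F2' ^^ n2) (H1' q1)" unfolding q_def by (rule comm_pow[OF cF2H1])
      also have "\<dots> = (F2' ^^ n2) ((-M) *\<^sub>R q1)" using n1(3) unfolding q1_def by simp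
      also have "\<dots> = (-M) *\<^sub>R q" unfolding q_def by (rule linear_scale[OF d2.Fpow_lin])
      finally have qH1: "H1' q = (-M) *\<^sub>R q" .
      define K where "K = {y. adjoint H1 y = M *\<^sub>R y}"
      have qK: "q \<in> K" unfolding K_def using negeq qH1 unfolding H1'_def by blast
      define A where "A x = H1 x - M *\<^sub>R x" for x
      have lA: "linear A" unfolding A_def
        by (rule linearI) (simp_all add: linear_add[OF t1.linH] linear_scale[OF t1.linH] algebra_simps)
      have kerA: "\<forall>x. A x = 0 \<longrightarrow> x \<in> span {a}" unfolding A_def using B1 by simp
      have orthK: "\<forall>x. y \<bullet> A x = 0" if "y \<in> K" for y
      proof
        fix x
        have "y \<bullet> H1 x = adjoint H1 y \<bullet> x"
          by (metis adjoint_works[OF t1.linH] inner_commute)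
        then show "y \<bullet> A x = 0" using that unfolding A_def K_def by (simp add: inner_diff_right)
      qed
      have Kq: "y \<in> span {q}" if "y \<in> K" for y
        by (rule kerT[OF lA kerA q0 orthK[OF qK] orthK[OF that]])
      have "H1' (E2' q) = E2' (H1' q)" using cE2H1 by blast
      also have "\<dots> = (-M) *\<^sub>R E2' q" unfolding qH1 by (rule linear_scale[OF d2.linE])
      finally have "E2' q \<in> K" unfolding K_def H1'_def using negeq by blast
      then obtain s2 where s2: "E2' q = s2 *\<^sub>R q" using Kq by (auto simp: real_vector.span_singleton)
      have "H1' (F2' q) = F2' (H1' q)" using cF2H1 by blast
      also have "\<dots> = (-M) *\<^sub>R F2' q" unfolding qH1 by (rule linear_scale[OF d2.linF])
      finally have "F2' q \<in> K" unfolding K_def H1'_def using negeq by blast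
      then obtain t2 where t2: "F2' q = t2 *\<^sub>R q" using Kq by (auto simp: real_vector.span_singleton)
      have "H2' q = 0" using line_triv[OF D2 s2 t2] by simp
      then show ?thesis using qH2 q0 Nb(1) by simp
    qed
  qed
  define U where "U = span {b, a}"
  have ind: "independent {b, a}"
    using real_vector.independent_insertI[OF nb] Ma(2)
    by (simp add: real_vector.independent_insertI real_vector.independent_empty real_vector.span_empty)
  have ba: "b \<noteq> a" using nb real_vector.span_base by blast
  have dU: "dim U = 2" unfolding U_def
    using real_vector.dim_span_eq_card_independent[OF ind] ba by simp
  have sU: "subspace U" unfolding U_def by (rule real_vector.subspace_span)
  from nd sU dU obtain x y c where xy: "x \<in> U" "y \<in> U" "wedge x y c \<noteq> 0" by blast
  have rep: "\<exists>k l. z = k *\<^sub>R b + l *\<^sub>R a" if "z \<in> U" for z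
  proof -
    from that obtain k where "z - k *\<^sub>R b \<in> span {a}"
      unfolding U_def using real_vector.span_insert[of b "{a}"] by auto
    then obtain l where "z - k *\<^sub>R b = l *\<^sub>R a" by (auto simp: real_vector.span_singleton)
    then show ?thesis by (metis diff_add_cancel add.commute)
  qed
  obtain k l where x: "x = k *\<^sub>R b + l *\<^sub>R a" using rep[OF xy(1)] by blast
  obtain k' l' where y: "y = k' *\<^sub>R b + l' *\<^sub>R a" using rep[OF xy(2)] by blast
  have bc: "bilinear (\<lambda>a b. wedge a b c)" using wb by blast
  have wba: "wedge b a c = 0" using wab ws by metis
  have "wedge x y c = 0"
    unfolding x y
    using bilinear_ladd[OF bc] bilinear_radd[OF bc] bilinear_lmul[OF bc] bilinear_rmul[OF bc]
      waa wbb wab wba by simp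
  then show False using xy(3) by simp
qed

theorem lemma5p4:
  fixes br :: "'g::real_vector \<Rightarrow> 'g \<Rightarrow> 'g"
    and rho :: "'g \<Rightarrow> 'w::euclidean_space \<Rightarrow> 'w"
    and wedge :: "'w \<Rightarrow> 'w \<Rightarrow> ('w \<Rightarrow> real)"
  assumes "semisimple_lie br"
    and "lie_rep br rho"
    and "inj rho"
    and "\<forall>a b. linear (wedge a b)"
    and "\<forall>c. bilinear (\<lambda>a b. wedge a b c)"
    and "\<forall>a b. wedge a b = wedge b a"
    and "\<forall>X a b c. wedge (rho X a) b c + wedge a (rho X b) c = - wedge a b (rho X c)"
    and "\<forall>U. subspace U \<and> dim U = 2 \<longrightarrow> (\<exists>a\<in>U. \<exists>b\<in>U. (\<exists>c. wedge a b c \<noteq> 0))"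
  shows "\<not> has_sl2sl2_subalgebra br"
proof
  assume "has_sl2sl2_subalgebra br"
  then obtain phi where
    ph: "\<forall>p\<in>sl2sl2. \<forall>q\<in>sl2sl2. \<forall>c::real. phi (p + q) = phi p + phi q \<and> phi (c *\<^sub>R p) = c *\<^sub>R phi p"
    and inj: "inj_on phi sl2sl2"
    and brk: "\<forall>p\<in>sl2sl2. \<forall>q\<in>sl2sl2. phi (sl2sl2_bracket p q) = br (phi p) (phi q)"
    unfolding has_sl2sl2_subalgebra_def by blast
  have radd: "\<forall>x y w. rho (x + y) w = rho x w + rho y w"
    and rsc: "\<forall>(c::real) x w. rho (c *\<^sub>R x) w = c *\<^sub>R rho x w"
    and rlin: "\<forall>x. linear (rho x)"
    and rbr: "\<forall>x y w. rho (br x y) w = rho x (rho y w) - rho y (rho x w)"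
    using assms(2) unfolding lie_rep_def by blast+
  define R where "R p = rho (phi p)" for p
  have Rbr: "\<forall>w. R p (R q w) - R q (R p w) = c *\<^sub>R R r w"
    if "p \<in> sl2sl2" "q \<in> sl2sl2" "r \<in> sl2sl2" "sl2sl2_bracket p q = c *\<^sub>R r" for p q r c
  proof
    fix w
    have eq1: "br (phi p) (phi q) = phi (c *\<^sub>R r)"
      using brk that(1,2) that(4)[symmetric] by auto
    have "R p (R q w) - R q (R p w) = rho (br (phi p) (phi q)) w" unfolding R_def using rbr by simp
    also have "\<dots> = rho (phi (c *\<^sub>R r)) w" by (simp only: eq1)
    also have "\<dots> = c *\<^sub>R R r w" unfolding R_def using ph that rsc by simp
    finally show "R p (R q w) - R q (R p w) = c *\<^sub>R R r w" .
  qed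
  define e1 where "e1 = (me, 0::real^2^2)"
  define f1 where "f1 = (mf, 0::real^2^2)"
  define h1 where "h1 = (mh, 0::real^2^2)"
  define e2 where "e2 = (0::real^2^2, me)"
  define f2 where "f2 = (0::real^2^2, mf)"
  define h2 where "h2 = (0::real^2^2, mh)"
  have mem: "e1 \<in> sl2sl2" "f1 \<in> sl2sl2" "h1 \<in> sl2sl2" "e2 \<in> sl2sl2" "f2 \<in> sl2sl2" "h2 \<in> sl2sl2"
    unfolding sl2sl2_def e1_def f1_def h1_def e2_def f2_def h2_def using mat_tr by auto
  have b1: "sl2sl2_bracket h1 e1 = 2 *\<^sub>R e1" "sl2sl2_bracket h1 f1 = (-2) *\<^sub>R f1"
    "sl2sl2_bracket e1 f1 = 1 *\<^sub>R h1"
    unfolding sl2sl2_bracket_def e1_def f1_def h1_def using mat_br1 mat_br2 mat_br3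
    by (simp_all add: mat_zero)
  have b2: "sl2sl2_bracket h2 e2 = 2 *\<^sub>R e2" "sl2sl2_bracket h2 f2 = (-2) *\<^sub>R f2"
    "sl2sl2_bracket e2 f2 = 1 *\<^sub>R h2"
    unfolding sl2sl2_bracket_def e2_def f2_def h2_def using mat_br1 mat_br2 mat_br3
    by (simp_all add: mat_zero)
  have bc: "sl2sl2_bracket p q = 0 *\<^sub>R p" if "p \<in> {e1, f1, h1}" "q \<in> {e2, f2, h2}" for p q
    using that unfolding sl2sl2_bracket_def e1_def f1_def h1_def e2_def f2_def h2_def
    by (auto simp: mat_zero zero_prod_def)
  have lR: "linear (R p)" for p unfolding R_def using rlin by blast
  have T1: "sl2trip (R e1) (R f1) (R h1)"
    unfolding sl2trip_def using lR Rbr[OF mem(3) mem(1) mem(1) b1(1)]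
      Rbr[OF mem(3) mem(2) mem(2) b1(2)] Rbr[OF mem(1) mem(2) mem(3) b1(3)] by simp
  have T2: "sl2trip (R e2) (R f2) (R h2)"
    unfolding sl2trip_def using lR Rbr[OF mem(6) mem(4) mem(4) b2(1)]
      Rbr[OF mem(6) mem(5) mem(5) b2(2)] Rbr[OF mem(4) mem(5) mem(6) b2(3)] by simp
  have comm: "X (Y v) = Y (X v)" if X: "X \<in> {R e1, R f1, R h1}" and Y: "Y \<in> {R e2, R f2, R h2}" for X Y v
  proof -
    obtain p where p: "p \<in> {e1, f1, h1}" "X = R p" using X by blast
    obtain q where q: "q \<in> {e2, f2, h2}" "Y = R q" using Y by blast
    have "p \<in> sl2sl2" "q \<in> sl2sl2" using p(1) q(1) mem by auto
    from Rbr[OF this \<open>p \<in> sl2sl2\<close> bc[OF p(1) q(1)]] show ?thesis using p q by simp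
  qed
  have rho0: "rho 0 w = 0" for w using radd[rule_format, of 0 0 w] by simp
  have phi0: "phi 0 = 0" using ph[rule_format, OF mem(1) mem(1), of 0] by simp
  have zmem: "(0::(real^2^2) \<times> (real^2^2)) \<in> sl2sl2" unfolding sl2sl2_def using mat_tr by (simp add: zero_prod_def)
  have Hn: "\<exists>v. R h v \<noteq> 0" if "h \<in> sl2sl2" "h \<noteq> 0" for h
  proof (rule ccontr)
    assume "\<not> ?thesis"
    then have "\<forall>v. rho (phi h) v = 0" unfolding R_def by blast
    then have "rho (phi h) = rho 0" by (simp add: fun_eq_iff rho0)
    then have "phi h = 0" using injD[OF assms(3)] by blast
    then have "phi h = phi 0" using phi0 by simp
    then show False using inj_onD[OF inj _ that(1) zmem] that(2) by blast
  qed
  have h1n: "h1 \<noteq> 0" and h2n: "h2 \<noteq> 0" unfolding h1_def h2_def using mh_nz by (auto simp: zero_prod_def)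
  have eqv: "\<forall>a b c. wedge (X a) b c + wedge a (X b) c = - wedge a b (X c)"
    if X: "X \<in> {R e1, R f1, R h1, R e2, R f2, R h2}" for X
  proof -
    obtain p where "X = R p" using X by blast
    then show ?thesis using spec[OF assms(7), of "phi p"] unfolding R_def by simp
  qed
  show False
    apply (rule core[of "R e1" "R f1" "R h1" "R e2" "R f2" "R h2" wedge])
             apply (rule T1)
            apply (rule T2)
           apply (erule (1) comm)
          apply (rule Hn[OF mem(3) h1n])
         apply (rule Hn[OF mem(6) h2n])
        apply (rule assms(4))
       apply (rule assms(5))
      apply (rule assms(6))
     apply (erule eqv)
    apply (rule assms(8))
    done
qed

end
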